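(* Fix a positive real number $k$ and set $m=m(n)=\lceil n/k\rceil$. Then the rate $\frac{\log_2|C_{n,m}|}{\binom{n}{2}}$ of the community code $C_{n,m}$ tends to $0$ as $n\to\infty$.
   Context: For integers $n\geq 2$, $N=\binom{n}{2}$ and $1\leq m\leq n$, the community code $C_{n,m}\subseteq\mathbb{F}_2^N$ consists of exactly those binary vectors of length $N$ that are the upper-triangular (off-diagonal) part of the adjacency matrix of a simple undirected graph on the labeled vertex set $\{1,\ldots,n\}$ which is a disjoint union of cliques, each clique having at least $m$ vertices. The rate of $C_{n,m}$ is $\log_2|C_{n,m}|/N$. *)

theory Defs
  imports "HOL-Analysis.Analysis"
begin

text \<open>Coordinates of F_2^N, N = n choose 2: the upper-triangular positions (i,j), 1 <= i < j <= n.
  A binary vector of length N is identified with its support, a subset of these positions.\<close>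
definition positions :: "nat \<Rightarrow> (nat \<times> nat) set" where
  "positions n = {(i, j). 1 \<le> i \<and> i < j \<and> j \<le> n}"

definition adj :: "(nat \<times> nat) set \<Rightarrow> nat \<Rightarrow> nat \<Rightarrow> bool" where
  "adj S u v \<longleftrightarrow> (u, v) \<in> S \<or> (v, u) \<in> S"

text \<open>The graph is a disjoint union of cliques, each with at least m vertices:
  the relation "u = v or u adjacent to v" is transitive on {1..n}
  (i.e. every connected component is a clique), and every vertex lies in a
  clique (its closed neighbourhood) of at least m vertices.\<close>
definition clique_union :: "nat \<Rightarrow> nat \<Rightarrow> (nat \<times> nat) set \<Rightarrow> bool" where
  "clique_union n m S \<longleftrightarrow>
     (\<forall>u\<in>{1..n}. \<forall>v\<in>{1..n}. \<forall>w\<in>{1..n}.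
        adj S u v \<longrightarrow> adj S v w \<longrightarrow> u \<noteq> w \<longrightarrow> adj S u w) \<and>
     (\<forall>u\<in>{1..n}. m \<le> card {v\<in>{1..n}. v = u \<or> adj S u v})"

definition community_code :: "nat \<Rightarrow> nat \<Rightarrow> (nat \<times> nat) set set" where
  "community_code n m = {S. S \<subseteq> positions n \<and> clique_union n m S}"

definition code_rate :: "nat \<Rightarrow> nat \<Rightarrow> real" where
  "code_rate n m = log 2 (real (card (community_code n m))) / real (n choose 2)"

end

theory Submission
  imports Defs "HOL-Library.FuncSet" "HOL-Real_Asymp.Real_Asymp"
begin

lemma code_repr:
  fixes k :: real
  assumes SC: "S \<in> community_code n m" and m0: "0 < m" and nk: "real n \<le> real m * k"
  shows "\<exists>f \<in> Pi\<^sub>E {1..n} (\<lambda>_. {..<nat \<lfloor>k\<rfloor> + 1}). S = {(u,v) \<in> positions n. f u = f v}"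
proof -
  have Spos: "S \<subseteq> positions n" and cu: "clique_union n m S"
    using SC by (auto simp: community_code_def)
  define R where "R u v \<longleftrightarrow> v = u \<or> adj S u v" for u v
  define N where "N u = {v\<in>{1..n}. R u v}" for u
  have sym: "R u v \<longleftrightarrow> R v u" for u v by (auto simp: R_def adj_def)
  have trans: "R u w" if "u \<in> {1..n}" "v \<in> {1..n}" "w \<in> {1..n}" "R u v" "R v w" for u v w
    using cu that unfolding clique_union_def R_def by metis
  have Nin: "u \<in> N u" if "u \<in> {1..n}" for u using that by (simp add: N_def R_def)
  have Neq: "N u = N v" if "u \<in> {1..n}" "v \<in> {1..n}" "R u v" for u v
    using trans sym that unfolding N_def by blast
  have Ncard: "m \<le> card (N u)" if "u \<in> {1..n}" for u
    using cu that unfolding clique_union_def N_def R_def by blast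
  have Nfin: "finite (N u)" for u by (simp add: N_def)
  have Nsub: "N u \<subseteq> {1..n}" for u by (auto simp: N_def)
  define r where "r u = Min (N u)" for u
  have r_in: "r u \<in> N u" if "u \<in> {1..n}" for u
    unfolding r_def using Nin[OF that] Nfin by (intro Min_in) auto
  have r_iff: "r u = r v \<longleftrightarrow> R u v" if "u \<in> {1..n}" "v \<in> {1..n}" for u v
  proof
    assume "r u = r v"
    then have "R u (r u)" "R (r u) v" "r u \<in> {1..n}"
      using r_in[OF that(1)] r_in[OF that(2)] sym by (auto simp: N_def)
    then show "R u v" using trans that by blast
  next
    assume "R u v" then show "r u = r v" using Neq that r_def by metis
  qed
  define L where "L = r ` {1..n}"
  have Lfin: "finite L" by (simp add: L_def)
  have fib: "{x\<in>{1..n}. r x = c} = N u" if "c = r u" "u \<in> {1..n}" for c u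
    using that r_iff sym unfolding N_def by auto
  have "card {1..n} = (\<Sum>c\<in>L. card {x\<in>{1..n}. r x = c})"
    unfolding L_def using sum.image_gen[of "{1..n}" "\<lambda>_. 1::nat" r] by simp
  also have "\<dots> \<ge> (\<Sum>c\<in>L. m)"
  proof (rule sum_mono)
    fix c assume "c \<in> L"
    then obtain u where "u \<in> {1..n}" "c = r u" by (auto simp: L_def)
    then show "m \<le> card {x\<in>{1..n}. r x = c}" using fib Ncard by simp
  qed
  finally have "card L * m \<le> n" by simp
  then have "real (card L) * real m \<le> real m * k" using nk
    by (metis of_nat_le_iff of_nat_mult order_trans)
  then have "real (card L) \<le> k" using m0 by (simp add: mult.commute)
  then have LK: "card L < nat \<lfloor>k\<rfloor> + 1"
    by (metis Suc_eq_plus1 le_nat_floor less_Suc_eq_le)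
  define rk where "rk c = card {l\<in>L. l < c}" for c
  have rk_lt: "rk c < card L" if "c \<in> L" for c
    unfolding rk_def using that Lfin by (intro psubset_card_mono) auto
  have rk_mono: "rk c < rk d" if "c \<in> L" "d \<in> L" "c < d" for c d
    unfolding rk_def using that Lfin by (intro psubset_card_mono) auto
  have rk_inj: "rk c = rk d \<longleftrightarrow> c = d" if "c \<in> L" "d \<in> L" for c d
    using rk_mono[OF that] rk_mono[OF that(2,1)] by (metis less_irrefl linorder_neqE_nat)
  define f where "f = restrict (\<lambda>u. rk (r u)) {1..n}"
  have rL: "r u \<in> L" if "u \<in> {1..n}" for u using that by (simp add: L_def)
  have fP: "f \<in> Pi\<^sub>E {1..n} (\<lambda>_. {..<nat \<lfloor>k\<rfloor> + 1})"
    unfolding f_def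
  proof (intro restrict_PiE_iff[THEN iffD2] ballI)
    fix u assume "u \<in> {1..n}"
    then have "rk (r u) < card L" using rk_lt rL by blast
    then show "rk (r u) \<in> {..<nat \<lfloor>k\<rfloor> + 1}" using LK by simp
  qed
  have Seq: "S = {(u,v) \<in> positions n. f u = f v}"
  proof (intro equalityI subsetI)
    fix p assume p: "p \<in> S"
    obtain u v where uv: "p = (u,v)" by force
    then have pos: "u \<in> {1..n}" "v \<in> {1..n}" "(u,v) \<in> positions n"
      using p Spos by (auto simp: positions_def)
    have "R u v" using p uv by (simp add: R_def adj_def)
    then have "r u = r v" using pos r_iff by blast
    then have "f u = f v" using pos by (simp add: f_def)
    then show "p \<in> {(u,v) \<in> positions n. f u = f v}" using pos uv by simp
  next
    fix p assume p: "p \<in> {(u,v) \<in> positions n. f u = f v}"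
    obtain u v where uv: "p = (u,v)" by force
    then have pos: "u \<in> {1..n}" "v \<in> {1..n}" "u < v" and fe: "f u = f v"
      using p by (auto simp: positions_def)
    then have "rk (r u) = rk (r v)" by (simp add: f_def)
    then have "R u v" using rk_inj rL pos r_iff by metis
    then have "(u,v) \<in> S \<or> (v,u) \<in> S" using pos by (simp add: R_def adj_def)
    moreover have "(v,u) \<notin> S" using Spos pos by (auto simp: positions_def)
    ultimately show "p \<in> S" using uv by simp
  qed
  show ?thesis
  proof (rule bexI[where x=f])
    show "S = {(u,v) \<in> positions n. f u = f v}" by (rule Seq)
    show "f \<in> Pi\<^sub>E {1..n} (\<lambda>_. {..<nat \<lfloor>k\<rfloor> + 1})" by (rule fP)
  qed
qed

lemma card_code_le:
  fixes k :: real
  assumes m0: "0 < m" and nk: "real n \<le> real m * k"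
  shows "card (community_code n m) \<le> (nat \<lfloor>k\<rfloor> + 1) ^ n"
proof -
  define K where "K = nat \<lfloor>k\<rfloor> + 1"
  define P where "P = Pi\<^sub>E {1..n} (\<lambda>_::nat. {..<K})"
  define G where "G = (\<lambda>f::nat\<Rightarrow>nat. {(u,v) \<in> positions n. f u = f v})"
  have sub: "community_code n m \<subseteq> G ` P"
  proof
    fix S assume "S \<in> community_code n m"
    from code_repr[OF this m0 nk] obtain f where
      f1: "f \<in> Pi\<^sub>E {1..n} (\<lambda>_. {..<nat \<lfloor>k\<rfloor> + 1})"
      and f2: "S = {(u,v) \<in> positions n. f u = f v}" by (elim bexE)
    have "f \<in> P" using f1 by (simp only: P_def K_def)
    moreover have "S = G f" using f2 by (simp only: G_def)
    ultimately show "S \<in> G ` P" by (intro image_eqI[where x=f])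
  qed
  have fin: "finite P" unfolding P_def by (simp add: finite_PiE)
  have "card (community_code n m) \<le> card (G ` P)"
    by (rule card_mono[OF finite_imageI[OF fin] sub])
  also have "\<dots> \<le> card P" by (rule card_image_le[OF fin])
  finally have "card (community_code n m) \<le> card P" .
  also have "card P = K ^ n" unfolding P_def by (simp add: card_PiE)
  finally show ?thesis by (simp add: K_def)
qed

theorem corollary1:
  fixes k :: real
  assumes "k > 0"
  shows "(\<lambda>n. code_rate n (nat \<lceil>real n / k\<rceil>)) \<longlonglongrightarrow> 0"
proof -
  define K where "K = nat \<lfloor>k\<rfloor> + 1"
  have K1: "real K \<ge> 1" by (simp add: K_def)
  define c where "c = 2 * log 2 (real K)"
  have c0: "c \<ge> 0" using K1 by (simp add: c_def)
  have lim: "(\<lambda>n::nat. c / (real n - 1)) \<longlonglongrightarrow> 0" by real_asymp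
  have bounds: "0 \<le> code_rate n (nat \<lceil>real n / k\<rceil>) \<and> code_rate n (nat \<lceil>real n / k\<rceil>) \<le> c / (real n - 1)"
    if n2: "n \<ge> 2" for n
  proof -
    define m where "m = nat \<lceil>real n / k\<rceil>"
    have xp: "real n / k > 0" using n2 assms by simp
    then have cp: "\<lceil>real n / k\<rceil> > 0" by simp
    then have m0: "0 < m" unfolding m_def by simp
    have mr: "real m = real_of_int \<lceil>real n / k\<rceil>" unfolding m_def
      by (rule of_nat_nat) (rule less_imp_le[OF cp])
    have "real n / k \<le> real m" unfolding mr by (rule le_of_int_ceiling)
    then have nk: "real n \<le> real m * k" using assms by (simp add: field_simps)
    have cb: "card (community_code n m) \<le> K ^ n"
      using card_code_le[OF m0 nk] by (simp add: K_def)
    have ch: "2 * (n choose 2) = n * (n - 1)"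
    proof -
      have "even (n * (n - 1))" by (cases n) auto
      then show ?thesis unfolding choose_two by (simp add: dvd_mult_div_cancel)
    qed
    have e1: "real (2 * (n choose 2)) = real (n * (n - 1))" by (simp only: ch)
    have e3: "real (n - 1) = real n - real 1" by (rule of_nat_diff) (use n2 in linarith)
    have e2: "real (n * (n - 1)) = real n * real (n - 1)" by (rule of_nat_mult)
    have e4: "real (2 * (n choose 2)) = 2 * real (n choose 2)" by simp
    have chr: "real (n choose 2) = real n * (real n - 1) / 2"
      using e1 e2 e3 e4 by (simp only: of_nat_1)
    have npos: "real n - 1 > 0" using n2 by simp
    have lg: "0 \<le> log 2 (real (card (community_code n m))) \<and>
              log 2 (real (card (community_code n m))) \<le> real n * log 2 (real K)"
    proof (cases "card (community_code n m) = 0")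
      case True
      have l0: "log 2 (real (card (community_code n m))) = 0" using True by (simp add: log_def)
      have "log 2 (real K) \<ge> 0" using K1 by simp
      then show ?thesis using l0 by simp
    next
      case False
      have cbr: "real (card (community_code n m)) \<le> real (K ^ n)" using cb by (simp only: of_nat_le_iff)
      have Kp: "K > 0" by (simp add: K_def)
      have pos1: "0 < real (card (community_code n m))" using False by simp
      have pos2: "0 < real (K ^ n)" using Kp by simp
      have "log 2 (real (card (community_code n m))) \<le> log 2 (real (K ^ n))"
        using log_le_cancel_iff[of 2, OF _ pos1 pos2] cbr by simp
      also have "\<dots> = real n * log 2 (real K)" using K1 by (simp add: log_nat_power)
      finally show ?thesis using False by simp
    qed
    have "code_rate n m = log 2 (real (card (community_code n m))) / (real n * (real n - 1) / 2)"
      unfolding code_rate_def chr ..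
    moreover have "log 2 (real (card (community_code n m))) / (real n * (real n - 1) / 2)
        \<le> (real n * log 2 (real K)) / (real n * (real n - 1) / 2)"
      using lg npos n2 by (intro divide_right_mono) auto
    moreover have "(real n * log 2 (real K)) / (real n * (real n - 1) / 2) = c / (real n - 1)"
      using npos n2 by (simp add: c_def field_simps)
    moreover have "0 \<le> log 2 (real (card (community_code n m))) / (real n * (real n - 1) / 2)"
      using lg npos n2 by simp
    ultimately have "0 \<le> code_rate n m \<and> code_rate n m \<le> c / (real n - 1)" by linarith
    then show ?thesis by (simp only: m_def)
  qed
  show ?thesis
  proof (rule tendsto_sandwich[OF _ _ tendsto_const lim])
    show "\<forall>\<^sub>F n in sequentially. 0 \<le> code_rate n (nat \<lceil>real n / k\<rceil>)"
      by (rule eventually_sequentiallyI[of 2]) (use bounds in blast)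
    show "\<forall>\<^sub>F n in sequentially. code_rate n (nat \<lceil>real n / k\<rceil>) \<le> c / (real n - 1)"
      by (rule eventually_sequentiallyI[of 2]) (use bounds in blast)
  qed
qed

end
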